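(* Consider the quadratic form $x\mapsto B_1(x,d_{uv},d_{v0},L)$ on $\mathbb R^4$, identified with a symmetric $4\times4$ matrix. Two of its four eigenvalues are nonnegative for all $d_{uv},d_{v0},L$; the other two do not have a definite sign. Let $\lambda_1^b(d_{uv},d_{v0},L)$ denote its smallest eigenvalue and set $$\upsilon:=e^{-2\pi\delta_b/L},\qquad \zeta:=\frac{d_{uv}}{d_{uv}+d_{v0}}=\frac{c_u+c_v}{c_0+c_u+2c_v}.$$ Then $\lambda_1^b(d_{uv},d_{v0},L)\ge0$ if and only if $\zeta\ge\zeta_1(\upsilon)$, where $\zeta_1$, defined on $(0,1)$ by $$\zeta_1(\upsilon)=\frac{1}{8\log^3\upsilon}\Big(9-12\upsilon^2+3\upsilon^4+4\log\upsilon\,(3+\log^2\upsilon)+\sqrt{R(\upsilon)}\Big),$$ $$R(\upsilon)=225-504\upsilon^2+342\upsilon^4-72\upsilon^6+9\upsilon^8+(360-288\upsilon^2-72\upsilon^4)\log\upsilon+144\log^2\upsilon+(-120+96\upsilon^2+24\upsilon^4)\log^3\upsilon-96\log^4\upsilon+16\log^6\upsilon,$$ extends to a continuous function on $[0,1]$.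
   Context: Let $L>0$ and $c_0,c_u,c_v\ge0$, not all zero; $d_{uv}:=c_u+c_v$, $d_{v0}:=c_v+c_0$, $\delta_b:=\big(\tfrac34(c_0+c_u+2c_v)\big)^{1/3}$. For $x\in\mathbb R^4$, $B_1(x,d_{uv},d_{v0},L):=\frac{4\pi^2}{L^2}[d_{uv}(x_1^2+x_3^2)+d_{v0}(x_2^2+x_4^2)]+\frac{L}{\pi}\big[2(1-\frac{2\pi\delta_b}{L})(x_1^2+x_3^2)+\frac12(x_2^2+x_4^2)-2(x_1x_2+x_3x_4)e^{-2\pi\delta_b/L}+4x_1x_3e^{-4\pi\delta_b/L}-2(x_1x_4+x_2x_3)e^{-6\pi\delta_b/L}+x_2x_4e^{-8\pi\delta_b/L}\big]$. *)

theory Defs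
  imports "HOL-Analysis.Analysis"
begin

definition delta_b :: "real \<Rightarrow> real \<Rightarrow> real \<Rightarrow> real" where
  "delta_b c0 cu cv = ((3/4) * (c0 + cu + 2*cv)) powr (1/3)"

definition B1 :: "real \<Rightarrow> real \<Rightarrow> real \<Rightarrow> real \<Rightarrow> real^4 \<Rightarrow> real" where
  "B1 c0 cu cv L x =
    (let duv = cu + cv; dv0 = cv + c0; d = delta_b c0 cu cv;
         x1 = x$1; x2 = x$2; x3 = x$3; x4 = x$4 in
     4 * pi^2 / L^2 * (duv * (x1^2 + x3^2) + dv0 * (x2^2 + x4^2))
     + L / pi * (2 * (1 - 2*pi*d/L) * (x1^2 + x3^2) + 1/2 * (x2^2 + x4^2)
        - 2 * (x1*x2 + x3*x4) * exp (-2*pi*d/L)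
        + 4 * x1 * x3 * exp (-4*pi*d/L)
        - 2 * (x1*x4 + x2*x3) * exp (-6*pi*d/L)
        + x2 * x4 * exp (-8*pi*d/L)))"

text \<open>The symmetric matrix associated to a quadratic form (by polarization),
  so that x^T M x = Q x.\<close>
definition quad_matrix :: "(real^4 \<Rightarrow> real) \<Rightarrow> real^4^4" where
  "quad_matrix Q = (\<chi> i j. (Q (axis i 1 + axis j 1) - Q (axis i 1) - Q (axis j 1)) / 2)"

definition is_eigenvalue :: "real^'n^'n \<Rightarrow> real \<Rightarrow> bool" where
  "is_eigenvalue A mu \<longleftrightarrow> (\<exists>v. v \<noteq> 0 \<and> A *v v = mu *\<^sub>R v)"

definition smallest_eigenvalue :: "real^'n^'n \<Rightarrow> real" where
  "smallest_eigenvalue A = Min {mu. is_eigenvalue A mu}"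

definition R_fun :: "real \<Rightarrow> real" where
  "R_fun u = (let l = ln u in
     225 - 504*u^2 + 342*u^4 - 72*u^6 + 9*u^8 + (360 - 288*u^2 - 72*u^4) * l
     + 144 * l^2 + (-120 + 96*u^2 + 24*u^4) * l^3 - 96 * l^4 + 16 * l^6)"

definition zeta1 :: "real \<Rightarrow> real" where
  "zeta1 u = (let l = ln u in
     1 / (8 * l^3) * (9 - 12*u^2 + 3*u^4 + 4 * l * (3 + l^2) + sqrt (R_fun u)))"

end

theory Submission
  imports Defs "HOL-Real_Asymp.Real_Asymp"
begin

lemma chain_step:
  fixes f f' :: "real \<Rightarrow> real"
  assumes "\<And>x. (f has_real_derivative f' x) (at x)" "f 0 = 0" "\<And>x. x \<ge> 0 \<Longrightarrow> f' x \<ge> 0"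
  shows "\<And>t. t \<ge> 0 \<Longrightarrow> f t \<ge> 0"
  using deriv_nonneg_imp_mono[of 0 _ f f'] assms by force

lemma G_nonneg:
  fixes t :: real assumes t: "t \<ge> 0"
  shows "(4*t^3-12*t+15)*exp(4*t) - 12*exp(3*t) - 12*exp(2*t) + 12*exp t - 3 \<ge> 0"
proof -
  define G5 where "G5 = (\<lambda>t::real. (3840+3072*t+15360*t^2+4096*t^3)*exp(4*t) - 2916*exp(3*t) - 384*exp(2*t) + 12*exp t)"
  define G4 where "G4 = (\<lambda>t::real. (1152-768*t+3072*t^2+1024*t^3)*exp(4*t) - 972*exp(3*t) - 192*exp(2*t) + 12*exp t)"
  define G3 where "G3 = (\<lambda>t::real. (408-480*t+576*t^2+256*t^3)*exp(4*t) - 324*exp(3*t) - 96*exp(2*t) + 12*exp t)"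
  define G2 where "G2 = (\<lambda>t::real. (144-168*t+96*t^2+64*t^3)*exp(4*t) - 108*exp(3*t) - 48*exp(2*t) + 12*exp t)"
  define G1 where "G1 = (\<lambda>t::real. (48-48*t+12*t^2+16*t^3)*exp(4*t) - 36*exp(3*t) - 24*exp(2*t) + 12*exp t)"
  define G0 where "G0 = (\<lambda>t::real. (4*t^3-12*t+15)*exp(4*t) - 12*exp(3*t) - 12*exp(2*t) + 12*exp t - 3)"
  have g5: "G5 x \<ge> 0" if "x \<ge> 0" for x
  proof -
    have e1: "exp (3*x) \<le> exp (4*x)" "exp (2*x) \<le> exp (4*x)" using that by auto
    have "3840 \<le> 3840+3072*x+15360*x^2+4096*x^3" using that by simp
    hence "3840 * exp(4*x) \<le> (3840+3072*x+15360*x^2+4096*x^3)*exp(4*x)"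
      by (intro mult_right_mono) auto
    moreover have "0 < exp x" "0 < exp (4*x)" by simp_all
    ultimately have "0 \<le> (3840+3072*x+15360*x^2+4096*x^3)*exp(4*x) - 2916*exp(3*x) - 384*exp(2*x) + 12*exp x"
      using e1 by linarith
    then show ?thesis unfolding G5_def by simp
  qed
  have d4: "(G4 has_real_derivative G5 x) (at x)" for x
    unfolding G4_def G5_def by (auto intro!: derivative_eq_intros simp: algebra_simps power2_eq_square power3_eq_cube)
  have d3: "(G3 has_real_derivative G4 x) (at x)" for x
    unfolding G3_def G4_def by (auto intro!: derivative_eq_intros simp: algebra_simps power2_eq_square power3_eq_cube)
  have d2: "(G2 has_real_derivative G3 x) (at x)" for x
    unfolding G2_def G3_def by (auto intro!: derivative_eq_intros simp: algebra_simps power2_eq_square power3_eq_cube)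
  have d1: "(G1 has_real_derivative G2 x) (at x)" for x
    unfolding G1_def G2_def by (auto intro!: derivative_eq_intros simp: algebra_simps power2_eq_square power3_eq_cube)
  have d0: "(G0 has_real_derivative G1 x) (at x)" for x
    unfolding G0_def G1_def by (auto intro!: derivative_eq_intros simp: algebra_simps power2_eq_square power3_eq_cube)
  have h4: "G4 x \<ge> 0" if "x \<ge> 0" for x using chain_step[OF d4 _ g5, of x] that by (simp add: G4_def)
  have h3: "G3 x \<ge> 0" if "x \<ge> 0" for x using chain_step[OF d3 _ h4, of x] that by (simp add: G3_def)
  have h2: "G2 x \<ge> 0" if "x \<ge> 0" for x using chain_step[OF d2 _ h3, of x] that by (simp add: G2_def)
  have h1: "G1 x \<ge> 0" if "x \<ge> 0" for x using chain_step[OF d1 _ h2, of x] that by (simp add: G1_def)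
  have h0: "G0 x \<ge> 0" if "x \<ge> 0" for x using chain_step[OF d0 _ h1, of x] that by (simp add: G0_def)
  from h0[OF t] show ?thesis by (simp add: G0_def)
qed

lemma H_nonneg:
  fixes t :: real assumes t: "t \<ge> 0"
  shows "(2/3*t^3 + 2 - 2*t)*(exp(2*t) + 1) - 4 \<ge> 0"
proof -
  define H4 where "H4 = (\<lambda>t::real. (64*t+64*t^2+32/3*t^3)*exp(2*t))"
  define H3 where "H3 = (\<lambda>t::real. (-4+8*t+24*t^2+16/3*t^3)*exp(2*t) + 4)"
  define H2 where "H2 = (\<lambda>t::real. (-4*t+8*t^2+8/3*t^3)*exp(2*t) + 4*t)"
  define H1 where "H1 = (\<lambda>t::real. (2-4*t+2*t^2+4/3*t^3)*exp(2*t) - 2 + 2*t^2)"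
  define H0 where "H0 = (\<lambda>t::real. (2/3*t^3 + 2 - 2*t)*(exp(2*t) + 1) - 4)"
  have g4: "H4 x \<ge> 0" if "x \<ge> 0" for x unfolding H4_def using that by simp
  have d3: "(H3 has_real_derivative H4 x) (at x)" for x
    unfolding H3_def H4_def by (auto intro!: derivative_eq_intros simp: algebra_simps power2_eq_square power3_eq_cube)
  have d2: "(H2 has_real_derivative H3 x) (at x)" for x
    unfolding H2_def H3_def by (auto intro!: derivative_eq_intros simp: algebra_simps power2_eq_square power3_eq_cube)
  have d1: "(H1 has_real_derivative H2 x) (at x)" for x
    unfolding H1_def H2_def by (auto intro!: derivative_eq_intros simp: algebra_simps power2_eq_square power3_eq_cube)
  have d0: "(H0 has_real_derivative H1 x) (at x)" for x
    unfolding H0_def H1_def by (auto intro!: derivative_eq_intros simp: algebra_simps power2_eq_square power3_eq_cube)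
  have h3: "H3 x \<ge> 0" if "x \<ge> 0" for x using chain_step[OF d3 _ g4, of x] that by (simp add: H3_def)
  have h2: "H2 x \<ge> 0" if "x \<ge> 0" for x using chain_step[OF d2 _ h3, of x] that by (simp add: H2_def)
  have h1: "H1 x \<ge> 0" if "x \<ge> 0" for x using chain_step[OF d1 _ h2, of x] that by (simp add: H1_def)
  have h0: "H0 x \<ge> 0" if "x \<ge> 0" for x using chain_step[OF d0 _ h1, of x] that by (simp add: H0_def)
  from h0[OF t] show ?thesis by (simp add: H0_def)
qed
lemma ker2:
  fixes a b c mu x y :: real
  assumes "(a-mu)*x + b*y = 0" "b*x + (c-mu)*y = 0" "x \<noteq> 0 \<or> y \<noteq> 0"
  shows "(a-mu)*(c-mu) - b^2 = 0"
proof -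
  have "((a-mu)*(c-mu) - b^2) * x = (c-mu)*((a-mu)*x + b*y) - b*(b*x + (c-mu)*y)"
    by (simp add: algebra_simps power2_eq_square)
  hence hx: "((a-mu)*(c-mu) - b^2) * x = 0" using assms by simp
  have "((a-mu)*(c-mu) - b^2) * y = (a-mu)*(b*x + (c-mu)*y) - b*((a-mu)*x + b*y)"
    by (simp add: algebra_simps power2_eq_square)
  hence hy: "((a-mu)*(c-mu) - b^2) * y = 0" using assms by simp
  show ?thesis using hx hy assms(3) by auto
qed

lemma ker2_ex:
  fixes a b c mu :: real
  assumes "(a-mu)*(c-mu) - b^2 = 0"
  shows "\<exists>x y. (x \<noteq> 0 \<or> y \<noteq> 0) \<and> (a-mu)*x + b*y = 0 \<and> b*x + (c-mu)*y = 0"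
proof (cases "b = 0 \<and> a - mu = 0")
  case True
  then show ?thesis by (intro exI[of _ 1] exI[of _ 0]) simp
next
  case False
  show ?thesis
    apply (rule exI[of _ "-b"], rule exI[of _ "a-mu"])
    using False assms by (auto simp: algebra_simps power2_eq_square)
qed

lemma mv4: "((M::real^4^4) *v v) $ i = M$i$1 * v$1 + M$i$2 * v$2 + M$i$3 * v$3 + M$i$4 * (v$4::real)"
  by (simp add: matrix_vector_mult_def sum_4)

lemma eig_char:
  fixes M :: "real^4^4"
  assumes "M$1$1 = p" "M$3$3 = p" "M$2$2 = q" "M$4$4 = q" "M$1$2 = r" "M$2$1 = r" "M$3$4 = r" "M$4$3 = r"
    "M$1$3 = w" "M$3$1 = w" "M$2$4 = h" "M$4$2 = h" "M$1$4 = y" "M$4$1 = y" "M$2$3 = y" "M$3$2 = y"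
  shows "is_eigenvalue M mu \<longleftrightarrow> ((p+w-mu)*(q+h-mu) - (r+y)^2 = 0 \<or> (p-w-mu)*(q-h-mu) - (r-y)^2 = 0)"
proof
  assume "is_eigenvalue M mu"
  then obtain v where v0: "v \<noteq> 0" and ev: "M *v v = mu *\<^sub>R v" unfolding is_eigenvalue_def by blast
  have E: "M$i$1 * v$1 + M$i$2 * v$2 + M$i$3 * v$3 + M$i$4 * v$4 = mu * v$i" for i
    using arg_cong[OF ev, of "\<lambda>w. w$i"] by (simp add: mv4)
  note E1 = E[of 1, unfolded assms] and E2 = E[of 2, unfolded assms]
    and E3 = E[of 3, unfolded assms] and E4 = E[of 4, unfolded assms]
  have nz: "v$1 \<noteq> 0 \<or> v$2 \<noteq> 0 \<or> v$3 \<noteq> 0 \<or> v$4 \<noteq> 0"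
    using v0 by (auto simp: vec_eq_iff forall_4)
  show "(p+w-mu)*(q+h-mu) - (r+y)^2 = 0 \<or> (p-w-mu)*(q-h-mu) - (r-y)^2 = 0"
  proof (cases "v$1 + v$3 \<noteq> 0 \<or> v$2 + v$4 \<noteq> 0")
    case True
    have "(p+w-mu)*(v$1 + v$3) + (r+y)*(v$2+v$4) = 0" using E1 E3 by (simp add: algebra_simps)
    moreover have "(r+y)*(v$1 + v$3) + (q+h-mu)*(v$2+v$4) = 0" using E2 E4 by (simp add: algebra_simps)
    ultimately show ?thesis using ker2 True by blast
  next
    case False
    hence F: "v$1 - v$3 \<noteq> 0 \<or> v$2 - v$4 \<noteq> 0" using nz by auto
    have "(p-w-mu)*(v$1 - v$3) + (r-y)*(v$2-v$4) = 0" using E1 E3 by (simp add: algebra_simps)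
    moreover have "(r-y)*(v$1 - v$3) + (q-h-mu)*(v$2-v$4) = 0" using E2 E4 by (simp add: algebra_simps)
    ultimately show ?thesis using ker2 F by blast
  qed
next
  assume "(p+w-mu)*(q+h-mu) - (r+y)^2 = 0 \<or> (p-w-mu)*(q-h-mu) - (r-y)^2 = 0"
  then obtain x1 x2 sg :: real where sg: "sg = 1 \<or> sg = -1" and nz: "x1 \<noteq> 0 \<or> x2 \<noteq> 0"
    and k1: "(p+sg * w-mu)*x1 + (r+sg * y)*x2 = 0" and k2: "(r+sg * y)*x1 + (q+sg * h-mu)*x2 = 0"
  proof (elim disjE)
    assume "(p+w-mu)*(q+h-mu) - (r+y)^2 = 0"
    from ker2_ex[OF this] obtain a b where "(a \<noteq> 0 \<or> b \<noteq> 0) \<and> (p+w-mu)*a + (r+y)*b = 0 \<and> (r+y)*a + (q+h-mu)*b = 0" by blast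
    then show thesis using that[of 1 a b] by simp
  next
    assume "(p-w-mu)*(q-h-mu) - (r-y)^2 = 0"
    from ker2_ex[OF this] obtain a b where "(a \<noteq> 0 \<or> b \<noteq> 0) \<and> (p-w-mu)*a + (r-y)*b = 0 \<and> (r-y)*a + (q-h-mu)*b = 0" by blast
    then show thesis using that[of "-1" a b] by simp
  qed
  define v :: "real^4" where "v = (\<chi> i. if i = 1 then x1 else if i = 2 then x2 else if i = 3 then sg * x1 else sg * x2)"
  have v1: "v$1 = x1" "v$2 = x2" "v$3 = sg * x1" "v$4 = sg * x2" by (simp_all add: v_def)
  have "v \<noteq> 0" using nz v1 by (auto simp: vec_eq_iff)
  moreover have "M *v v = mu *\<^sub>R v"
  proof -
    have sq: "sg * sg = 1" using sg by auto
    have "(M *v v)$i = (mu *\<^sub>R v)$i" for i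
    proof -
      have "i = 1 \<or> i = 2 \<or> i = 3 \<or> i = 4" using exhaust_4 by auto
      then show ?thesis
      proof (elim disjE)
        assume i: "i = 1"
        show ?thesis unfolding i mv4 assms v1 using k1 by (simp add: algebra_simps v1)
      next
        assume i: "i = 2"
        show ?thesis unfolding i mv4 assms v1 using k2 by (simp add: algebra_simps v1)
      next
        assume i: "i = 3"
        show ?thesis unfolding i mv4 assms v1 using sg k1 by (elim disjE) (simp_all add: algebra_simps v1)
      next
        assume i: "i = 4"
        show ?thesis unfolding i mv4 assms v1 using sg k2 by (elim disjE) (simp_all add: algebra_simps v1)
      qed
    qed
    then show ?thesis by (simp add: vec_eq_iff)
  qed
  ultimately show "is_eigenvalue M mu" unfolding is_eigenvalue_def by blast
qed
lemma quad_roots: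
  fixes a b c mu :: real
  shows "(a-mu)*(c-mu) - b^2 = 0 \<longleftrightarrow>
     mu = (a+c+sqrt((a-c)^2+4*b^2))/2 \<or> mu = (a+c-sqrt((a-c)^2+4*b^2))/2"
proof -
  define S where "S = sqrt((a-c)^2+4*b^2)"
  have S2: "S^2 = (a-c)^2+4*b^2" unfolding S_def by simp
  have "(a-mu)*(c-mu) - b^2 = (mu - (a+c+S)/2) * (mu - (a+c-S)/2)"
    using S2 by (simp add: algebra_simps power2_eq_square field_simps)
  then show ?thesis unfolding S_def[symmetric] by simp
qed

lemma min_root_nonneg:
  fixes a b c :: real
  shows "(a+c-sqrt((a-c)^2+4*b^2))/2 \<ge> 0 \<longleftrightarrow> a+c \<ge> 0 \<and> a*c \<ge> b^2"
proof -
  have "(a+c-sqrt((a-c)^2+4*b^2))/2 \<ge> 0 \<longleftrightarrow> sqrt((a-c)^2+4*b^2) \<le> a+c" by simp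
  also have "\<dots> \<longleftrightarrow> a+c \<ge> 0 \<and> (a-c)^2+4*b^2 \<le> (a+c)^2"
  proof
    assume h: "sqrt((a-c)^2+4*b^2) \<le> a+c"
    have "0 \<le> sqrt((a-c)^2+4*b^2)" by simp
    hence "a+c \<ge> 0" using h by linarith
    moreover have "(sqrt((a-c)^2+4*b^2))^2 \<le> (a+c)^2"
      using h by (intro power_mono) auto
    ultimately show "a+c \<ge> 0 \<and> (a-c)^2+4*b^2 \<le> (a+c)^2" by simp
  next
    assume h: "a+c \<ge> 0 \<and> (a-c)^2+4*b^2 \<le> (a+c)^2"
    hence "sqrt((a-c)^2+4*b^2) \<le> sqrt((a+c)^2)" by (intro real_sqrt_le_mono) auto
    thus "sqrt((a-c)^2+4*b^2) \<le> a+c" using h by simp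
  qed
  also have "\<dots> \<longleftrightarrow> a+c \<ge> 0 \<and> a*c \<ge> b^2" by (simp add: algebra_simps power2_eq_square)
  finally show ?thesis .
qed
lemma smallest_nonneg:
  fixes M :: "real^4^4"
  assumes "M$1$1 = p" "M$3$3 = p" "M$2$2 = q" "M$4$4 = q" "M$1$2 = r" "M$2$1 = r" "M$3$4 = r" "M$4$3 = r"
    "M$1$3 = w" "M$3$1 = w" "M$2$4 = h" "M$4$2 = h" "M$1$4 = y" "M$4$1 = y" "M$2$3 = y" "M$3$2 = y"
  shows "smallest_eigenvalue M \<ge> 0 \<longleftrightarrow>
     ((p+w)+(q+h) \<ge> 0 \<and> (p+w)*(q+h) \<ge> (r+y)^2) \<and> ((p-w)+(q-h) \<ge> 0 \<and> (p-w)*(q-h) \<ge> (r-y)^2)"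
proof -
  define D1 where "D1 = sqrt(((p+w)-(q+h))^2+4*(r+y)^2)"
  define D2 where "D2 = sqrt(((p-w)-(q-h))^2+4*(r-y)^2)"
  have "{mu. is_eigenvalue M mu} = {((p+w)+(q+h)+D1)/2, ((p+w)+(q+h)-D1)/2, ((p-w)+(q-h)+D2)/2, ((p-w)+(q-h)-D2)/2}"
    unfolding eig_char[OF assms] quad_roots D1_def[symmetric] D2_def[symmetric]
    by auto
  hence "smallest_eigenvalue M \<ge> 0 \<longleftrightarrow> 
     ((p+w)+(q+h)+D1)/2 \<ge> 0 \<and> ((p+w)+(q+h)-D1)/2 \<ge> 0 \<and> ((p-w)+(q-h)+D2)/2 \<ge> 0 \<and> ((p-w)+(q-h)-D2)/2 \<ge> 0"
    unfolding smallest_eigenvalue_def by simp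
  also have "\<dots> \<longleftrightarrow> ((p+w)+(q+h)-D1)/2 \<ge> 0 \<and> ((p-w)+(q-h)-D2)/2 \<ge> 0"
  proof -
    have "D1 \<ge> 0" "D2 \<ge> 0" unfolding D1_def D2_def by simp_all
    thus ?thesis by auto
  qed
  also have "\<dots> \<longleftrightarrow> ((p+w)+(q+h) \<ge> 0 \<and> (p+w)*(q+h) \<ge> (r+y)^2) \<and> ((p-w)+(q-h) \<ge> 0 \<and> (p-w)*(q-h) \<ge> (r-y)^2)"
    unfolding D1_def D2_def min_root_nonneg ..
  finally show ?thesis .
qed
lemma qm_entries:
  fixes Q :: "real^4 \<Rightarrow> real"
  assumes Q: "\<And>x. Q x = al*(x$1^2+x$3^2) + be*(x$2^2+x$4^2) + 2*rh*(x$1*x$2+x$3*x$4) + 2 * sv*(x$1*x$3) + 2*et*(x$1*x$4+x$2*x$3) + 2*ka*(x$2*x$4)"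
  shows "quad_matrix Q$1$1 = al" "quad_matrix Q$3$3 = al" "quad_matrix Q$2$2 = be" "quad_matrix Q$4$4 = be"
    "quad_matrix Q$1$2 = rh" "quad_matrix Q$2$1 = rh" "quad_matrix Q$3$4 = rh" "quad_matrix Q$4$3 = rh"
    "quad_matrix Q$1$3 = sv" "quad_matrix Q$3$1 = sv" "quad_matrix Q$2$4 = ka" "quad_matrix Q$4$2 = ka"
    "quad_matrix Q$1$4 = et" "quad_matrix Q$4$1 = et" "quad_matrix Q$2$3 = et" "quad_matrix Q$3$2 = et"
  by (simp_all add: quad_matrix_def Q axis_def power2_eq_square algebra_simps)

lemma B1_form:
  "B1 c0 cu cv L x = (4*pi^2/L^2*(cu+cv) + L/pi*(2*(1-2*pi*delta_b c0 cu cv/L)))*(x$1^2+x$3^2)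
     + (4*pi^2/L^2*(cv+c0) + L/pi*(1/2))*(x$2^2+x$4^2)
     + 2*(-(L/pi)*exp(-2*pi*delta_b c0 cu cv/L))*(x$1*x$2+x$3*x$4)
     + 2*(2*(L/pi)*exp(-4*pi*delta_b c0 cu cv/L))*(x$1*x$3)
     + 2*(-(L/pi)*exp(-6*pi*delta_b c0 cu cv/L))*(x$1*x$4+x$2*x$3)
     + 2*((L/pi)*exp(-8*pi*delta_b c0 cu cv/L)/2)*(x$2*x$4)"
proof -
  define A where "A = 4*pi^2/L^2"
  define M where "M = L/pi"
  define T where "T = 2*pi*delta_b c0 cu cv/L"
  define e1 where "e1 = exp(-2*pi*delta_b c0 cu cv/L)"
  define e2 where "e2 = exp(-4*pi*delta_b c0 cu cv/L)"
  define e3 where "e3 = exp(-6*pi*delta_b c0 cu cv/L)"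
  define e4 where "e4 = exp(-8*pi*delta_b c0 cu cv/L)"
  show ?thesis unfolding B1_def Let_def A_def[symmetric] M_def[symmetric] T_def[symmetric]
    e1_def[symmetric] e2_def[symmetric] e3_def[symmetric] e4_def[symmetric]
    by (simp add: algebra_simps)
qed
lemma core:
  fixes t z :: real
  assumes t: "t > 0" and z0: "0 \<le> z" and z1: "z \<le> 1"
  defines "u \<equiv> exp (-t)" and "k \<equiv> 2/3*t^3"
  shows "((k*z+2-2*t+2*u^2) + (k*(1-z)+1/2+u^4/2) \<ge> 0 \<and> (k*z+2-2*t+2*u^2)*(k*(1-z)+1/2+u^4/2) \<ge> (-u-u^3)^2)
       \<and> ((k*z+2-2*t-2*u^2) + (k*(1-z)+1/2-u^4/2) \<ge> 0 \<and> (k*z+2-2*t-2*u^2)*(k*(1-z)+1/2-u^4/2) \<ge> (-u+u^3)^2)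
       \<longleftrightarrow> z \<ge> zeta1 u"
proof -
  define E where "E = exp t"
  have E1: "E > 1" using t unfolding E_def by simp
  have uE: "u * E = 1" unfolding u_def E_def by (simp flip: exp_add)
  have u0: "u > 0" unfolding u_def by simp
  have u1: "u < 1" using t unfolding u_def by simp
  have k0: "k > 0" unfolding k_def using t by simp
  have ex: "exp (real n * t) = E ^ n" for n unfolding E_def by (simp add: exp_of_nat_mult)
  have e4: "exp (4*t) = E^4" and e3: "exp(3*t) = E^3" and e2: "exp (2*t) = E^2"
    using ex[of 4] ex[of 3] ex[of 2] by simp_all
  define al where "al = 2 - 2*t - 2*u^2"
  define be where "be = (1 - u^4)/2"
  define ga where "ga = u - u^3"
  define S where "S = k + al + be"
  have ga0: "ga \<ge> 0" unfolding ga_def using u0 u1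
    by (simp add: power3_eq_cube mult_le_cancel_left1 mult_le_one)
  have G: "(4*t^3-12*t+15)*E^4 - 12*E^3 - 12*E^2 + 12*E - 3 \<ge> 0"
    using G_nonneg[of t] t e4 e3 e2 by (simp add: E_def)
  have I1: "6*(S - 2*ga) * E^4 = (4*t^3-12*t+15)*E^4 - 12*E^3 - 12*E^2 + 12*E - 3"
  proof -
    have "6*(S - 2*ga) = 4*t^3-12*t+15 - 12*u - 12*u^2 + 12*u^3 - 3*u^4"
      unfolding S_def k_def al_def be_def ga_def by (simp add: field_simps)
    moreover have "(4*t^3-12*t+15 - 12*u - 12*u^2 + 12*u^3 - 3*u^4) * E^4
       = (4*t^3-12*t+15)*E^4 - 12*(u*E)*E^3 - 12*(u*E)^2*E^2 + 12*(u*E)^3*E - 3*(u*E)^4"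
      by (simp add: algebra_simps power2_eq_square power3_eq_cube power4_eq_xxxx)
    ultimately show ?thesis using uE by simp
  qed
  have SG: "S \<ge> 2*ga"
  proof -
    have "6*(S - 2*ga) * E^4 \<ge> 0" using I1 G by simp
    moreover have "E^4 > 0" using E1 by simp
    ultimately have "6*(S - 2*ga) \<ge> 0" by (simp add: zero_le_mult_iff)
    thus ?thesis by simp
  qed
  define D where "D = S^2 - 4*ga^2"
  have D0: "D \<ge> 0"
  proof -
    have "D = (S - 2*ga)*(S + 2*ga)" unfolding D_def by (simp add: algebra_simps power2_eq_square)
    moreover have "S - 2*ga \<ge> 0" "S + 2*ga \<ge> 0" using SG ga0 by simp_all
    ultimately show ?thesis by simp
  qed
  define sD where "sD = sqrt D"
  have sD0: "sD \<ge> 0" and sD2: "sD^2 = D" unfolding sD_def using D0 by simp_all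
  define w1 where "w1 = ((k+be-al) - sD)/2"
  define w2 where "w2 = ((k+be-al) + sD)/2"
  define f where "f = (\<lambda>w. (w+al)*(k+be-w) - ga^2)"
  have ffac: "f w = -(w - w1)*(w - w2)" for w
  proof -
    have "f w + (w - w1)*(w - w2) = (D - sD^2)/4"
      unfolding f_def w1_def w2_def D_def S_def by (simp add: field_simps power2_eq_square)
    thus ?thesis using sD2 by (simp add: algebra_simps)
  qed
  have H: "(2/3*t^3 + 2 - 2*t)*(E^2 + 1) - 4 \<ge> 0" using H_nonneg[of t] t e2 by (simp add: E_def)
  have fk: "f k \<ge> 0"
  proof -
    have "f k = (1-u^2)/2 * ((2/3*t^3 + 2 - 2*t)*(1 + u^2) - 4*u^2)"
      unfolding f_def k_def al_def be_def ga_def by (simp add: field_simps power2_eq_square power3_eq_cube power4_eq_xxxx)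
    also have "(2/3*t^3 + 2 - 2*t)*(1 + u^2) - 4*u^2 = (2/3*t^3 + 2 - 2*t)*((u*E)^2 + u^2) - 4*u^2" using uE by simp
    also have "\<dots> = u^2 * ((2/3*t^3 + 2 - 2*t)*(E^2 + 1) - 4)" by (simp add: algebra_simps power2_eq_square)
    finally have "f k = (1-u^2)/2 * (u^2 * ((2/3*t^3 + 2 - 2*t)*(E^2 + 1) - 4))" .
    moreover have "(1-u^2) \<ge> 0" using u0 u1 by (simp add: abs_square_le_1)
    moreover have "u^2 * ((2/3*t^3 + 2 - 2*t)*(E^2 + 1) - 4) \<ge> 0" using H by simp
    ultimately show ?thesis by (metis divide_nonneg_nonneg mult_nonneg_nonneg zero_le_numeral)
  qed
  have w12: "w1 \<le> w2" unfolding w1_def w2_def using sD0 by simp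
  have kw: "w1 \<le> k \<and> k \<le> w2"
  proof -
    have "(k - w1)*(k - w2) = - f k" unfolding ffac by (simp add: algebra_simps)
    hence "(k - w1)*(k - w2) \<le> 0" using fk by simp
    thus ?thesis using w12 by (auto simp: mult_le_0_iff)
  qed
  define a1 where "a1 = k*z + al"
  define c1 where "c1 = k*(1-z) + be"
  have Qa: "(k*z+2-2*t-2*u^2) = a1" "(k*(1-z)+1/2-u^4/2) = c1" "(-u+u^3)^2 = ga^2"
    unfolding a1_def c1_def al_def be_def ga_def by (simp_all add: field_simps power2_eq_square)
  have Pa: "(k*z+2-2*t+2*u^2) = a1 + 4*u^2" "(k*(1-z)+1/2+u^4/2) = c1 + u^4" "(-u-u^3)^2 = (ga + 2*u^3)^2"
    unfolding a1_def c1_def al_def be_def ga_def by (simp_all add: field_simps power2_eq_square)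
  have sum1: "a1 + c1 = S" unfolding a1_def c1_def S_def by (simp add: algebra_simps)
  have PQ: "(a1 + 4*u^2) + (c1 + u^4) \<ge> 0 \<and> (a1 + 4*u^2)*(c1 + u^4) \<ge> (ga + 2*u^3)^2"
    if "a1*c1 \<ge> ga^2" 
  proof -
    have S0: "a1 + c1 \<ge> 0" using sum1 SG ga0 by simp
    have p0: "a1*c1 \<ge> 0" using that zero_le_power2[of ga] by linarith
    have a1c1: "a1 \<ge> 0 \<and> c1 \<ge> 0"
    proof (rule ccontr)
      assume "\<not> (a1 \<ge> 0 \<and> c1 \<ge> 0)"
      hence "(a1 < 0 \<and> c1 > 0) \<or> (c1 < 0 \<and> a1 > 0)" using S0 by linarith
      hence "a1*c1 < 0" by (auto simp: mult_neg_pos mult_pos_neg)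
      thus False using p0 by simp
    qed
    define X where "X = u^2*a1 + 4*c1"
    have X0: "X \<ge> 0" unfolding X_def using a1c1 by simp
    have "X^2 - (4*u*ga)^2 = (u^2*a1 - 4*c1)^2 + 16*u^2*(a1*c1 - ga^2)"
      unfolding X_def by (simp add: algebra_simps power2_eq_square)
    also have "\<dots> \<ge> 0" using that by simp
    finally have "(4*u*ga)^2 \<le> X^2" by simp
    hence XG: "4*u*ga \<le> X" using X0 by (rule power2_le_imp_le)
    have "(a1 + 4*u^2)*(c1 + u^4) - (ga + 2*u^3)^2 = (a1*c1 - ga^2) + u^2*(X - 4*u*ga)"
      unfolding X_def by (simp add: algebra_simps power2_eq_square power3_eq_cube power4_eq_xxxx)
    moreover have "u^2*(X - 4*u*ga) \<ge> 0" using XG by simp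
    ultimately have "(a1 + 4*u^2)*(c1 + u^4) \<ge> (ga + 2*u^3)^2" using that by linarith
    moreover have "(a1 + 4*u^2) + (c1 + u^4) \<ge> 0" 
    proof -
      have "u^2 \<ge> 0" "u^4 \<ge> 0" using u0 by simp_all
      thus ?thesis using S0 by linarith
    qed
    ultimately show ?thesis by simp
  qed
  have lnu: "ln u = -t" unfolding u_def by simp
  have R36: "R_fun u = 36 * D"
    unfolding R_fun_def Let_def lnu D_def S_def k_def al_def be_def ga_def
    by (simp add: field_simps eval_nat_numeral)
  have z1eq: "zeta1 u = w1 / k"
  proof -
    have "sqrt (R_fun u) = 6 * sD" unfolding R36 sD_def by (simp add: real_sqrt_mult)
    thus ?thesis unfolding zeta1_def Let_def lnu w1_def k_def al_def be_def using t
      by (simp add: field_simps power2_eq_square power3_eq_cube power4_eq_xxxx)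
  qed
  have fa: "a1*c1 - ga^2 = f (k*z)" unfolding f_def a1_def c1_def by (simp add: algebra_simps)
  have kz: "k*z \<le> k" using k0 z1 by simp
  have "a1*c1 \<ge> ga^2 \<longleftrightarrow> f (k*z) \<ge> 0" by (simp add: fa[symmetric])
  also have "\<dots> \<longleftrightarrow> w1 \<le> k*z \<and> k*z \<le> w2" unfolding ffac using w12
    by (auto simp: zero_le_mult_iff)
  also have "\<dots> \<longleftrightarrow> w1 \<le> k*z" using kz kw by linarith
  also have "\<dots> \<longleftrightarrow> w1/k \<le> z" using k0 by (simp add: divide_le_eq mult.commute)
  finally have main: "a1*c1 \<ge> ga^2 \<longleftrightarrow> z \<ge> zeta1 u" unfolding z1eq by simp
  have S0: "a1 + c1 \<ge> 0" using sum1 SG ga0 by simp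
  show ?thesis unfolding Qa Pa using PQ main S0 by auto
qed
lemma zeta1_lim0: "(zeta1 \<longlongrightarrow> 0) (at_right 0)"
  unfolding zeta1_def R_fun_def Let_def by real_asymp

lemma zeta1_lim1: "(zeta1 \<longlongrightarrow> - (((1104 / 5) powr (1 / 2) - 20) / 8)) (at_left 1)"
  unfolding zeta1_def R_fun_def Let_def by real_asymp

lemma zeta1_ext: "\<exists>g. continuous_on {0..1} g \<and> (\<forall>u\<in>{0<..<1}. g u = zeta1 u)"
proof -
  define c where "c = - (((1104 / 5) powr (1 / 2) - 20) / 8 :: real)"
  define g where "g = (\<lambda>u::real. if u = 0 then 0 else if u = 1 then c else zeta1 u)"
  have eq: "\<forall>u\<in>{0<..<1}. g u = zeta1 u" unfolding g_def by auto
  have "continuous_on {0..1} g"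
  proof (rule continuous_on_IccI)
    have ev: "eventually (\<lambda>x. zeta1 x = g x) (at_right 0)"
    proof -
      have "eventually (\<lambda>x. x \<in> {0<..<1}) (at_right (0::real))" by (rule eventually_at_right_real) simp
      thus ?thesis by eventually_elim (auto simp: g_def)
    qed
    show "(g \<longlongrightarrow> g 0) (at_right 0)"
      using tendsto_cong[OF ev] zeta1_lim0 by (simp add: g_def)
  next
    have ev: "eventually (\<lambda>x. zeta1 x = g x) (at_left 1)"
    proof -
      have "eventually (\<lambda>x. x \<in> {0<..<1}) (at_left (1::real))" by (rule eventually_at_left_real) simp
      thus ?thesis by eventually_elim (auto simp: g_def)
    qed
    show "(g \<longlongrightarrow> g 1) (at_left 1)"
      using tendsto_cong[OF ev] zeta1_lim1 by (simp add: g_def c_def)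
  next
    fix x :: real assume x: "0 < x" "x < 1"
    have ev: "eventually (\<lambda>y. zeta1 y = g y) (at x)"
    proof -
      have "eventually (\<lambda>y. y \<in> {0<..<1}) (at x)"
        using x by (intro eventually_at_in_open') auto
      thus ?thesis by eventually_elim (auto simp: g_def)
    qed
    have lx: "ln x \<noteq> 0" using x by simp
    have "isCont zeta1 x"
      unfolding zeta1_def R_fun_def Let_def using x lx
      by (intro continuous_intros) auto
    hence "(zeta1 \<longlongrightarrow> zeta1 x) (at x)" by (simp add: isCont_def)
    thus "(g \<longlongrightarrow> g x) (at x)"
      using tendsto_cong[OF ev] x by (simp add: g_def)
  qed simp
  with eq show ?thesis by blast
qed
lemma psd_scale:
  fixes m a b c :: real assumes "m > 0"
  shows "((m*a) + (m*c) \<ge> 0 \<and> (m*a)*(m*c) \<ge> (m*b)^2) \<longleftrightarrow> (a + c \<ge> 0 \<and> a*c \<ge> b^2)"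
proof -
  have e1: "(m*a) + (m*c) \<ge> 0 \<longleftrightarrow> a + c \<ge> 0"
  proof -
    have "(m*a) + (m*c) = m*(a+c)" by (simp add: algebra_simps)
    thus ?thesis using assms by (simp add: zero_le_mult_iff)
  qed
  have e2: "(m*a)*(m*c) \<ge> (m*b)^2 \<longleftrightarrow> a*c \<ge> b^2"
  proof -
    have q: "(m*a)*(m*c) = m^2*(a*c)" "(m*b)^2 = m^2*b^2" by (simp_all add: algebra_simps power2_eq_square)
    have "m^2 > 0" using assms by simp
    show ?thesis unfolding q using mult_le_cancel_left_pos[OF \<open>m^2 > 0\<close>] by blast
  qed
  show ?thesis using e1 e2 by simp
qed

theorem lemma4p5:
  fixes L c0 cu cv :: real
  assumes "L > 0" and "c0 \<ge> 0" and "cu \<ge> 0" and "cv \<ge> 0"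
    and "\<not> (c0 = 0 \<and> cu = 0 \<and> cv = 0)"
  shows "(smallest_eigenvalue (quad_matrix (B1 c0 cu cv L)) \<ge> 0
            \<longleftrightarrow> (cu + cv) / ((cu + cv) + (cv + c0))
                  \<ge> zeta1 (exp (- 2 * pi * delta_b c0 cu cv / L)))
         \<and> (\<exists>g. continuous_on {0..1} g \<and> (\<forall>u\<in>{0<..<1}. g u = zeta1 u))"
proof (rule conjI[OF _ zeta1_ext])
  note L = assms(1)
  define d where "d = delta_b c0 cu cv"
  define X where "X = (3/4)*(c0+cu+2*cv)"
  have Ds: "c0+cu+2*cv > 0" using assms by auto
  have X0: "X > 0" unfolding X_def using Ds by simp
  have dX: "d = X powr (1/3)" unfolding d_def delta_b_def X_def by simp
  have d0: "d > 0" unfolding dX using X0 by simp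
  have d3: "d^3 = X"
  proof -
    have "d^3 = d powr (real 3)" using d0 by (simp add: powr_realpow)
    also have "\<dots> = X" unfolding dX powr_powr using X0 by simp
    finally show ?thesis .
  qed
  define t where "t = 2*pi*d/L"
  have t0: "t > 0" unfolding t_def using d0 L by simp
  define u where "u = exp (-t)"
  have ex: "exp (real n * (-t)) = u ^ n" for n unfolding u_def by (rule exp_of_nat_mult)
  have eu1: "exp (-2*pi*d/L) = u" unfolding u_def t_def by simp
  have eu2: "exp (-4*pi*d/L) = u^2" using ex[of 2] unfolding t_def by (simp add: mult.assoc)
  have eu3: "exp (-6*pi*d/L) = u^3" using ex[of 3] unfolding t_def by (simp add: mult.assoc)
  have eu4: "exp (-8*pi*d/L) = u^4" using ex[of 4] unfolding t_def by (simp add: mult.assoc)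
  define m where "m = L/pi"
  have m0: "m > 0" unfolding m_def using L by simp
  define z where "z = (cu + cv) / ((cu + cv) + (cv + c0))"
  have z0: "0 \<le> z" and z1: "z \<le> 1" unfolding z_def using assms Ds by (simp_all add: divide_le_eq_1)
  define k where "k = 2/3*t^3"
  have t3: "t^3 = (2*pi/L)^3 * X" unfolding t_def using d3
    by (simp add: power_mult_distrib power_divide)
  have mk: "m*k = 4*pi^2/L^2*(c0+cu+2*cv)"
    unfolding m_def k_def t3 X_def using L by (simp add: field_simps power2_eq_square power3_eq_cube)
  have zD: "z*(c0+cu+2*cv) = cu+cv" "(1-z)*(c0+cu+2*cv) = cv+c0" unfolding z_def using Ds by (simp_all add: field_simps)
  have c1: "4*pi^2/L^2*(cu+cv) + L/pi*(2*(1-2*pi*delta_b c0 cu cv/L)) = m*(k*z+2-2*t)"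
  proof -
    have "4*pi^2/L^2*(cu+cv) = m*k*z" unfolding mk zD(1)[symmetric] using L by (simp add: field_simps)
    moreover have "L/pi*(2*(1-2*pi*delta_b c0 cu cv/L)) = m*(2-2*t)" unfolding m_def t_def d_def by (simp add: algebra_simps)
    ultimately show ?thesis by (simp add: algebra_simps)
  qed
  have c2: "4*pi^2/L^2*(cv+c0) + L/pi*(1/2) = m*(k*(1-z)+1/2)"
  proof -
    have h1: "4*pi^2/L^2*(cv+c0) = m*k*(1-z)" unfolding mk zD(2)[symmetric] using L by (simp add: field_simps)
    have h2: "L/pi*(1/2) = m*(1/2)" by (simp add: m_def)
    show ?thesis unfolding h1 h2 by (simp add: algebra_simps)
  qed
  have c3: "-(L/pi)*exp(-2*pi*delta_b c0 cu cv/L) = -m*u" using eu1 unfolding m_def d_def by simp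
  have c4: "2*(L/pi)*exp(-4*pi*delta_b c0 cu cv/L) = 2*m*u^2" using eu2 unfolding m_def d_def by simp
  have c5: "-(L/pi)*exp(-6*pi*delta_b c0 cu cv/L) = -m*u^3" using eu3 unfolding m_def d_def by simp
  have c6: "(L/pi)*exp(-8*pi*delta_b c0 cu cv/L)/2 = m*u^4/2" using eu4 unfolding m_def d_def by simp
  have Bf: "\<And>x. B1 c0 cu cv L x = (m*(k*z+2-2*t))*(x$1^2+x$3^2) + (m*(k*(1-z)+1/2))*(x$2^2+x$4^2)
     + 2*(-m*u)*(x$1*x$2+x$3*x$4) + 2*(2*m*u^2)*(x$1*x$3) + 2*(-m*u^3)*(x$1*x$4+x$2*x$3) + 2*(m*u^4/2)*(x$2*x$4)"
    by (simp only: B1_form c1 c2 c3 c4 c5 c6)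
  note E = qm_entries[OF Bf]
  have "smallest_eigenvalue (quad_matrix (B1 c0 cu cv L)) \<ge> 0 \<longleftrightarrow>
     ((m*(k*z+2-2*t) + 2*m*u^2) + (m*(k*(1-z)+1/2) + m*u^4/2) \<ge> 0 \<and>
        (m*(k*z+2-2*t) + 2*m*u^2)*(m*(k*(1-z)+1/2) + m*u^4/2) \<ge> (-m*u + -m*u^3)^2) \<and>
     ((m*(k*z+2-2*t) - 2*m*u^2) + (m*(k*(1-z)+1/2) - m*u^4/2) \<ge> 0 \<and>
        (m*(k*z+2-2*t) - 2*m*u^2)*(m*(k*(1-z)+1/2) - m*u^4/2) \<ge> (-m*u - -m*u^3)^2)"
    by (rule smallest_nonneg[OF E])
  also have "\<dots> \<longleftrightarrow>
     ((m*(k*z+2-2*t+2*u^2)) + (m*(k*(1-z)+1/2+u^4/2)) \<ge> 0 \<and>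
        (m*(k*z+2-2*t+2*u^2))*(m*(k*(1-z)+1/2+u^4/2)) \<ge> (m*(-u-u^3))^2) \<and>
     ((m*(k*z+2-2*t-2*u^2)) + (m*(k*(1-z)+1/2-u^4/2)) \<ge> 0 \<and>
        (m*(k*z+2-2*t-2*u^2))*(m*(k*(1-z)+1/2-u^4/2)) \<ge> (m*(-u+u^3))^2)"
  proof -
    have r: "m*(k*z+2-2*t) + 2*m*u^2 = m*(k*z+2-2*t+2*u^2)"
      "m*(k*(1-z)+1/2) + m*u^4/2 = m*(k*(1-z)+1/2+u^4/2)"
      "-m*u + -m*u^3 = m*(-u-u^3)"
      "m*(k*z+2-2*t) - 2*m*u^2 = m*(k*z+2-2*t-2*u^2)"
      "m*(k*(1-z)+1/2) - m*u^4/2 = m*(k*(1-z)+1/2-u^4/2)"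
      "-m*u - -m*u^3 = m*(-u+u^3)"
      by (simp_all add: algebra_simps)
    show ?thesis by (simp only: r)
  qed
  also have "\<dots> \<longleftrightarrow>
     ((k*z+2-2*t+2*u^2) + (k*(1-z)+1/2+u^4/2) \<ge> 0 \<and> (k*z+2-2*t+2*u^2)*(k*(1-z)+1/2+u^4/2) \<ge> (-u-u^3)^2)
       \<and> ((k*z+2-2*t-2*u^2) + (k*(1-z)+1/2-u^4/2) \<ge> 0 \<and> (k*z+2-2*t-2*u^2)*(k*(1-z)+1/2-u^4/2) \<ge> (-u+u^3)^2)"
    unfolding psd_scale[OF m0] ..
  also have "\<dots> \<longleftrightarrow> z \<ge> zeta1 u"
    unfolding u_def k_def by (rule core[OF t0 z0 z1])
  finally show "smallest_eigenvalue (quad_matrix (B1 c0 cu cv L)) \<ge> 0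
            \<longleftrightarrow> (cu + cv) / ((cu + cv) + (cv + c0))
                  \<ge> zeta1 (exp (- 2 * pi * delta_b c0 cu cv / L))"
    unfolding z_def using eu1 unfolding d_def by simp
qed

end
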